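(* Let $k\ge2$ be the cache size, let $1\le r\le k-1$ and $N=k+r$. For the cycle access graph $C_N$ on $N$ vertices, \[\mathcal{I}^{C_N}[\mathrm{FWF},\mathrm{LRU}]=\left[0,\ 1-\frac1k\right].\]
   Context: Paging: a cache holds at most $k$ pages and is initially empty. A request to a page in the cache is a hit; otherwise it is a fault, the page is brought into the cache, evicting a page first if the cache is full. $\mathcal{A}(I)$ is the number of faults of $\mathcal{A}$ on request sequence $I$. LRU evicts the least recently requested cached page; FWF, on a fault with a full cache, empties the cache and then brings in the requested page. Access graph: a graph $G$ whose vertices are the pages; a request sequence respects $G$ if any two consecutive requests are identical or adjacent in $G$; $L(G)$ is the set of such sequences. $C_N$ is the cycle on $N$ vertices. Relative interval: $\mathrm{Min}_{\mathcal{A},\mathcal{B}}(n,G)=\min\{\mathcal{A}(I)-\mathcal{B}(I): I\in L(G),|I|=n\}$, $\mathrm{Max}_{\mathcal{A},\mathcal{B}}(n,G)$ analogously with max; $\mathrm{Min}^G(\mathcal{A},\mathcal{B})=\liminf_{n\to\infty}\mathrm{Min}_{\mathcal{A},\mathcal{B}}(n,G)/n$, $\mathrm{Max}^G(\mathcal{A},\mathcal{B})=\limsup_{n\to\infty}\mathrm{Max}_{\mathcal{A},\mathcal{B}}(n,G)/n$, and $\mathcal{I}^G[\mathcal{A},\mathcal{B}]=[\mathrm{Min}^G(\mathcal{A},\mathcal{B}),\mathrm{Max}^G(\mathcal{A},\mathcal{B})]$. *)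

theory Defs
  imports "HOL-Analysis.Analysis"
begin

text \<open>LRU: the cache is a list of cached pages ordered by recency
  (most recently requested first). On a fault with a full cache the
  least recently requested page (the last one) is evicted.\<close>

fun lru_faults :: "nat \<Rightarrow> 'a list \<Rightarrow> 'a list \<Rightarrow> nat" where
  "lru_faults k cache [] = 0"
| "lru_faults k cache (p # ps) =
     (if p \<in> set cache then lru_faults k (p # removeAll p cache) ps
      else Suc (lru_faults k (p # (if length cache < k then cache else butlast cache)) ps))"

definition LRU :: "nat \<Rightarrow> 'a list \<Rightarrow> nat" where
  "LRU k I = lru_faults k [] I"

fun fwf_faults :: "nat \<Rightarrow> 'a set \<Rightarrow> 'a list \<Rightarrow> nat" where
  "fwf_faults k C [] = 0"
| "fwf_faults k C (p # ps) =
     (if p \<in> C then fwf_faults k C ps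
      else Suc (fwf_faults k (if card C < k then insert p C else {p}) ps))"

definition FWF :: "nat \<Rightarrow> 'a list \<Rightarrow> nat" where
  "FWF k I = fwf_faults k {} I"

definition respects_graph :: "'a set \<Rightarrow> ('a \<Rightarrow> 'a \<Rightarrow> bool) \<Rightarrow> 'a list \<Rightarrow> bool" where
  "respects_graph V adj I \<longleftrightarrow> set I \<subseteq> V \<and> successively (\<lambda>x y. x = y \<or> adj x y) I"

definition cycle_adj :: "nat \<Rightarrow> nat \<Rightarrow> nat \<Rightarrow> bool" where
  "cycle_adj N i j \<longleftrightarrow> j = (i + 1) mod N \<or> i = (j + 1) mod N"

definition rel_min :: "('a list \<Rightarrow> nat) \<Rightarrow> ('a list \<Rightarrow> nat) \<Rightarrow> 'a set \<Rightarrow> ('a \<Rightarrow> 'a \<Rightarrow> bool) \<Rightarrow> nat \<Rightarrow> int" where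
  "rel_min A B V adj n = Min ((\<lambda>I. int (A I) - int (B I)) ` {I. respects_graph V adj I \<and> length I = n})"

definition rel_max :: "('a list \<Rightarrow> nat) \<Rightarrow> ('a list \<Rightarrow> nat) \<Rightarrow> 'a set \<Rightarrow> ('a \<Rightarrow> 'a \<Rightarrow> bool) \<Rightarrow> nat \<Rightarrow> int" where
  "rel_max A B V adj n = Max ((\<lambda>I. int (A I) - int (B I)) ` {I. respects_graph V adj I \<and> length I = n})"

definition MinG :: "('a list \<Rightarrow> nat) \<Rightarrow> ('a list \<Rightarrow> nat) \<Rightarrow> 'a set \<Rightarrow> ('a \<Rightarrow> 'a \<Rightarrow> bool) \<Rightarrow> ereal" where
  "MinG A B V adj = liminf (\<lambda>n. ereal (real_of_int (rel_min A B V adj n) / real n))"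

definition MaxG :: "('a list \<Rightarrow> nat) \<Rightarrow> ('a list \<Rightarrow> nat) \<Rightarrow> 'a set \<Rightarrow> ('a \<Rightarrow> 'a \<Rightarrow> bool) \<Rightarrow> ereal" where
  "MaxG A B V adj = limsup (\<lambda>n. ereal (real_of_int (rel_max A B V adj n) / real n))"

end

theory Submission imports Defs begin

definition inv :: "nat \<Rightarrow> 'a set \<Rightarrow> 'a list \<Rightarrow> bool" where
  "inv k C c \<longleftrightarrow> distinct c \<and> length c \<le> k \<and> C = set (take (card C) c)"

lemma inv_card: assumes "inv k C c" shows "card C \<le> length c" "finite C"
proof -
  have d: "distinct c" and e: "C = set (take (card C) c)" using assms by (auto simp: inv_def)
  have "card C = card (set (take (card C) c))" using e by simp
  also have "\<dots> = length (take (card C) c)" using d by (simp add: distinct_card)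
  finally show "card C \<le> length c" by simp
  show "finite C" using e by (metis List.finite_set)
qed

lemma main_ineq:
  assumes "inv k C c" "k \<ge> 1"
  shows "lru_faults k c I \<le> fwf_faults k C I \<and>
         k * fwf_faults k C I + card C \<le> k * lru_faults k c I + (k-1) * length I + k"
  using assms
proof (induction I arbitrary: C c)
  case Nil
  then show ?case using inv_card[OF Nil(1)] by (auto simp: inv_def)
next
  case (Cons p I)
  have d: "distinct c" and lc: "length c \<le> k" and e: "C = set (take (card C) c)"
    using Cons.prems by (auto simp: inv_def)
  have cC: "card C \<le> length c" and fC: "finite C" using inv_card[OF Cons.prems(1)] by auto
  show ?case
  proof (cases "p \<in> C")
    case True
    then have pc: "p \<in> set c" using e by (metis in_set_takeD)
    obtain as bs where c: "c = as @ p # bs" and pas: "p \<notin> set as" using split_list_first[OF pc] by blast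
    have la: "length as < card C"
    proof (rule ccontr)
      assume "\<not> ?thesis"
      then have "take (card C) c = take (card C) as" using c by simp
      then show False using True e pas by (metis in_set_takeD)
    qed
    have "set (take (card C) (p # removeAll p c)) = set (take (card C) c)"
      using la d c by (auto simp: take_Cons' removeAll_id take_append)
    then have inv': "inv k C (p # removeAll p c)"
      using d lc e pc length_removeAll_less[OF pc] by (auto simp: inv_def distinct_removeAll)
    from Cons.IH[OF inv' Cons.prems(2)] show ?thesis using True pc by simp
  next
    case False
    note pC = False
    show ?thesis
    proof (cases "p \<in> set c")
      case True
      obtain as bs where c: "c = as @ p # bs" and pas: "p \<notin> set as" using split_list_first[OF True] by blast
      have la: "card C \<le> length as"
      proof (rule ccontr)
        assume "\<not> ?thesis"
        then have "card C - length as = Suc (card C - length as - 1)" by simp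
        then have "p \<in> set (take (card C) c)" using c by (metis in_set_conv_decomp take_Suc_Cons take_append)
        then show False using pC e by simp
      qed
      have ck: "card C < k"
      proof (rule ccontr)
        assume "\<not> ?thesis"
        then have "card C = length c" using cC lc by simp
        then have "C = set c" using e by simp
        then show False using True pC by simp
      qed
      have rc: "removeAll p c = as @ bs" using c d by (simp add: removeAll_id)
      have ci: "card (insert p C) = Suc (card C)" using fC pC by simp
      have "set (take (card (insert p C)) (p # removeAll p c)) = insert p C"
        using ci rc la e c by (simp add: take_append)
      then have inv': "inv k (insert p C) (p # removeAll p c)"
        using d lc True length_removeAll_less[OF True] by (auto simp: inv_def distinct_removeAll)
      from Cons.IH[OF inv' Cons.prems(2)] show ?thesis using True pC ck ci Cons.prems(2) by simp linarith
    next
      case False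
      define c' where "c' = (if length c < k then c else butlast c)"
      have tc: "take (card C) c' = take (card C) c" if "card C < k"
        using that cC lc unfolding c'_def by (auto simp: butlast_conv_take min_def)
      have dc': "distinct c'" "length c' < k" "p \<notin> set c'"
        unfolding c'_def using d lc False Cons.prems(2) by (auto simp: distinct_butlast dest: in_set_butlastD)
      have lf: "lru_faults k c (p # I) = Suc (lru_faults k (p # c') I)"
        using False unfolding c'_def by simp
      show ?thesis
      proof (cases "card C < k")
        case True
        have ci: "card (insert p C) = Suc (card C)" using fC pC by simp
        have inv': "inv k (insert p C) (p # c')"
          using ci tc[OF True] e dc' by (auto simp: inv_def)
        from Cons.IH[OF inv' Cons.prems(2)] show ?thesis using True pC lf ci Cons.prems(2) by simp linarith
      next
        case ck: False
        have inv': "inv k {p} (p # c')"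
          using dc' by (auto simp: inv_def)
        from Cons.IH[OF inv' Cons.prems(2)] show ?thesis using ck pC lf Cons.prems(2) cC lc by simp linarith
      qed
    qed
  qed
qed
lemma lru_cold:
  "distinct xs \<Longrightarrow> set xs \<inter> set c = {} \<Longrightarrow> length c + length xs \<le> k \<Longrightarrow>
   lru_faults k c (xs @ ys) = length xs + lru_faults k (rev xs @ c) ys"
  by (induction xs arbitrary: c) auto

lemma lru_hits:
  "set xs \<subseteq> set c \<Longrightarrow>
   lru_faults k c (xs @ ys) = lru_faults k (fold (\<lambda>p c. p # removeAll p c) xs c) ys"
proof (induction xs arbitrary: c)
  case (Cons a xs)
  have "set xs \<subseteq> set (a # removeAll a c)" using Cons.prems by auto
  from Cons.IH[OF this] show ?case using Cons.prems by simp
qed simp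

lemma fold_mtf:
  "distinct xs \<Longrightarrow> fold (\<lambda>p c. p # removeAll p c) xs c = rev xs @ filter (\<lambda>x. x \<notin> set xs) c"
  by (induction xs arbitrary: c) (auto simp: removeAll_filter_not_eq filter_filter intro!: filter_cong)

lemma fwf_cold:
  "distinct xs \<Longrightarrow> set xs \<inter> C = {} \<Longrightarrow> finite C \<Longrightarrow> card C + length xs \<le> k \<Longrightarrow>
   fwf_faults k C (xs @ ys) = length xs + fwf_faults k (C \<union> set xs) ys"
  by (induction xs arbitrary: C) auto

definition Aseq :: "nat \<Rightarrow> nat list" where "Aseq k = [0..<k]"
definition Bseq :: "nat \<Rightarrow> nat list" where "Bseq k = k # rev [1..<k]"

lemma lru_period:
  assumes "k \<ge> 1"
  shows "lru_faults k (rev [0..<k]) (Bseq k @ Aseq k @ ys) = 2 + lru_faults k (rev [0..<k]) ys"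
proof -
  have bl: "butlast (rev [0..<k]) = rev [1..<k]" by (simp add: butlast_rev tl_upt)
  have f1: "fold (\<lambda>p c. p # removeAll p c) (rev [1..<k]) (k # rev [1..<k]) = [1..<Suc k]"
    using assms by (simp add: fold_mtf filter_empty_conv)
  have f2: "fold (\<lambda>p c. p # removeAll p c) [1..<k] (0 # [1..<k]) = rev [0..<k]"
    using assms by (simp add: fold_mtf filter_empty_conv upt_conv_Cons)
  have A: "Aseq k = 0 # [1..<k]" using assms by (simp add: Aseq_def upt_conv_Cons)
  have bl2: "butlast [1..<Suc k] = [1..<k]" by simp
  have "lru_faults k (rev [0..<k]) (Bseq k @ Aseq k @ ys)
      = Suc (lru_faults k (k # rev [1..<k]) (rev [1..<k] @ Aseq k @ ys))"
    using bl by (simp add: Bseq_def)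
  also have "lru_faults k (k # rev [1..<k]) (rev [1..<k] @ Aseq k @ ys) = lru_faults k [1..<Suc k] (Aseq k @ ys)"
    using lru_hits[of "rev [1..<k]" "k # rev [1..<k]" k "Aseq k @ ys"] f1 assms by (simp add: subset_insertI)
  also have "lru_faults k [1..<Suc k] (Aseq k @ ys) = Suc (lru_faults k (0 # [1..<k]) ([1..<k] @ ys))"
    unfolding A using bl2 by simp
  also have "lru_faults k (0 # [1..<k]) ([1..<k] @ ys) = lru_faults k (rev [0..<k]) ys"
    using lru_hits[of "[1..<k]" "0 # [1..<k]" k ys] f2 by (simp add: subset_insertI)
  finally show ?thesis by simp
qed

lemma fwf_period:
  assumes "k \<ge> 1"
  shows "fwf_faults k {0..<k} (Bseq k @ Aseq k @ ys) = 2 * k + fwf_faults k {0..<k} ys"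
proof -
  have ins0: "insert 0 {Suc 0..<k} = {..<k}" using assms by auto
  have A: "Aseq k = 0 # [1..<k]" using assms by (simp add: Aseq_def upt_conv_Cons)
  have "fwf_faults k {0..<k} (Bseq k @ Aseq k @ ys) = Suc (fwf_faults k {k} (rev [1..<k] @ Aseq k @ ys))"
    by (simp add: Bseq_def)
  also have "fwf_faults k {k} (rev [1..<k] @ Aseq k @ ys) = (k - 1) + fwf_faults k {1..<Suc k} (Aseq k @ ys)"
    using assms by (subst fwf_cold) (auto simp: atLeastLessThanSuc)
  also have "fwf_faults k {1..<Suc k} (Aseq k @ ys) = Suc (fwf_faults k {0} ([1..<k] @ ys))"
    unfolding A by simp
  also have "fwf_faults k {0} ([1..<k] @ ys) = (k - 1) + fwf_faults k {0..<k} ys"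
    using assms by (subst fwf_cold) (auto simp: atLeast0LessThan lessThan_Suc_atMost[symmetric] ins0)
  finally show ?thesis using assms by simp
qed

fun Rseq :: "nat \<Rightarrow> nat \<Rightarrow> nat list" where
  "Rseq k 0 = []"
| "Rseq k (Suc m) = Bseq k @ Aseq k @ Rseq k m"

lemma lru_R: "k \<ge> 1 \<Longrightarrow> lru_faults k (rev [0..<k]) (Rseq k m) = 2 * m"
  by (induction m) (auto simp: lru_period)

lemma fwf_R: "k \<ge> 1 \<Longrightarrow> fwf_faults k {0..<k} (Rseq k m) = 2 * k * m"
  by (induction m) (auto simp: fwf_period)

lemma LRU_W: "k \<ge> 1 \<Longrightarrow> LRU k (Aseq k @ Rseq k m) = k + 2 * m"
  unfolding LRU_def using lru_cold[of "[0..<k]" "[]" k "Rseq k m"] lru_R[of k m]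
  by (simp add: Aseq_def)

lemma FWF_W: "k \<ge> 1 \<Longrightarrow> FWF k (Aseq k @ Rseq k m) = k + 2 * k * m"
  unfolding FWF_def using fwf_cold[of "[0..<k]" "{}" k "Rseq k m"] fwf_R[of k m]
  by (simp add: Aseq_def atLeast0LessThan)

lemma len_R: "k \<ge> 1 \<Longrightarrow> length (Rseq k m) = 2 * k * m"
  by (induction m) (auto simp: Aseq_def Bseq_def)

lemma succ_upt: "successively (\<lambda>x y. y = Suc x) [a..<b]"
proof (induction b)
  case (Suc b)
  show ?case
  proof (cases "a < b")
    case True
    then have "last [a..<b] = b - 1" by (simp add: last_upt)
    then show ?thesis using Suc True by (auto simp: successively_append_iff)
  next
    case False
    then have "[a..<Suc b] = [] \<or> [a..<Suc b] = [b]" by auto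
    then show ?thesis by auto
  qed
qed simp

lemma B_rev: "k \<ge> 1 \<Longrightarrow> Bseq k = rev [1..<Suc k]"
  by (simp add: Bseq_def)

lemma resp_W:
  assumes "k \<ge> 2" "k < N"
  shows "respects_graph {..<N} (cycle_adj N) (Aseq k @ Rseq k m)"
proof -
  let ?Q = "\<lambda>x y. x = y \<or> cycle_adj N x y"
  have sA: "successively ?Q (Aseq k)"
    unfolding Aseq_def
    by (rule successively_mono[OF succ_upt]) (use assms in \<open>auto simp: cycle_adj_def\<close>)
  have sB: "successively ?Q (Bseq k)"
    unfolding B_rev[of k, OF order_trans[OF one_le_numeral assms(1)]] successively_rev
    by (rule successively_mono[OF succ_upt]) (use assms in \<open>auto simp: cycle_adj_def\<close>)
  have hA: "hd (Aseq k) = 0" "Aseq k \<noteq> []" "last (Aseq k) = k - 1"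
    using assms by (auto simp: Aseq_def last_upt)
  have hB: "hd (Bseq k) = k" "Bseq k \<noteq> []" "last (Bseq k) = 1"
    using assms by (auto simp: Bseq_def last_rev hd_rev)
  have adj1: "?Q (k - 1) k" "?Q 1 0" using assms by (auto simp: cycle_adj_def)
  have "successively ?Q (Aseq k @ Rseq k m) \<and> set (Aseq k @ Rseq k m) \<subseteq> {..<N}"
  proof (induction m)
    case 0
    then show ?case using sA assms by (auto simp: Aseq_def)
  next
    case (Suc m)
    have "Aseq k @ Rseq k (Suc m) = Aseq k @ Bseq k @ (Aseq k @ Rseq k m)" by simp
    moreover have "successively ?Q (Bseq k @ (Aseq k @ Rseq k m))"
      using Suc sB hA hB adj1 by (auto simp: successively_append_iff)
    moreover have "set (Bseq k) \<subseteq> {..<N}" using assms by (auto simp: Bseq_def)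
    ultimately show ?case
      using Suc sA hA hB adj1 by (auto simp: successively_append_iff)
  qed
  then show ?thesis by (simp add: respects_graph_def)
qed

lemma succ_rep: "successively (\<lambda>x y. x = y \<or> Q x y) (replicate n p)"
  by (induction n) (auto simp: successively_Cons)

lemma fwf_rep: "fwf_faults k {p} (replicate n p) = 0"
  by (induction n) auto

lemma lru_rep: "lru_faults k [p] (replicate n p) = 0"
  by (induction n) auto

lemma inv0: "inv k {} []" by (simp add: inv_def)

lemma ineqs:
  assumes "k \<ge> 1"
  shows "LRU k I \<le> FWF k I" "k * FWF k I \<le> k * LRU k I + (k-1) * length I + k"
  using main_ineq[OF inv0 assms, of I] by (auto simp: LRU_def FWF_def)

theorem theorem8:
  fixes k r N :: nat
  assumes "k \<ge> 2" and "1 \<le> r" and "r \<le> k - 1" and "N = k + r"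
  shows "MinG (FWF k) (LRU k) {..<N} (cycle_adj N) = 0 \<and>
         MaxG (FWF k) (LRU k) {..<N} (cycle_adj N) = ereal (1 - 1 / real k)"
proof -
  have k1: "k \<ge> 1" using assms by simp
  have kN: "k < N" using assms by simp
  define S where "S n = {I. respects_graph {..<N} (cycle_adj N) I \<and> length I = n}" for n
  define D where "D I = int (FWF k I) - int (LRU k I)" for I :: "nat list"
  have finS: "finite (S n)" for n
    by (rule finite_subset[OF _ finite_lists_length_eq[of "{..<N}" n]])
       (auto simp: S_def respects_graph_def)
  have repS: "replicate n 0 \<in> S n" for n
    using kN by (auto simp: S_def respects_graph_def succ_rep)
  have Drep: "D (replicate n 0) = 0" for n
    by (cases n) (auto simp: D_def FWF_def LRU_def fwf_rep lru_rep k1)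
  have Dnn: "D I \<ge> 0" for I using ineqs(1)[OF k1, of I] by (simp add: D_def)
  have rmin: "rel_min (FWF k) (LRU k) {..<N} (cycle_adj N) n = 0" for n
  proof -
    have "rel_min (FWF k) (LRU k) {..<N} (cycle_adj N) n = Min (D ` S n)"
      by (simp add: rel_min_def D_def S_def)
    also have "\<dots> = 0"
      by (rule Min_eqI) (use finS repS Drep Dnn in \<open>auto intro!: image_eqI\<close>)
    finally show ?thesis .
  qed
  have part1: "MinG (FWF k) (LRU k) {..<N} (cycle_adj N) = 0"
    unfolding MinG_def rmin by (simp add: Liminf_const zero_ereal_def)
  define X where "X n = ereal (real_of_int (rel_max (FWF k) (LRU k) {..<N} (cycle_adj N) n) / real n)" for n
  have rmax: "rel_max (FWF k) (LRU k) {..<N} (cycle_adj N) n = Max (D ` S n)" for n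
    by (simp add: rel_max_def D_def S_def)
  have Dup: "real k * real_of_int (D I) \<le> real (k-1) * real (length I) + real k" for I
  proof -
    have "k * FWF k I \<le> k * LRU k I + (k-1) * length I + k" by (rule ineqs(2)[OF k1])
    then have "real k * real (FWF k I) \<le> real k * real (LRU k I) + real (k-1) * real (length I) + real k"
      by (metis of_nat_add of_nat_le_iff of_nat_mult)
    then show ?thesis by (simp add: D_def algebra_simps)
  qed
  have upper: "X n \<le> ereal ((1 - 1 / real k) + 1 / real n)" if "n \<ge> 1" for n
  proof -
    obtain I where I: "I \<in> S n" "Max (D ` S n) = D I"
      using finS repS by (metis (no_types, lifting) Max_in empty_iff finite_imageI image_iff image_is_empty)
    have li: "length I = n" using I by (simp add: S_def)
    have "real k * real_of_int (D I) \<le> real (k-1) * real n + real k" using Dup[of I] li by simp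
    then have "real_of_int (D I) \<le> (real (k-1) * real n + real k) / real k"
      using k1 by (simp add: field_simps)
    then have "real_of_int (D I) / real n \<le> (real (k-1) * real n + real k) / real k / real n"
      by (rule divide_right_mono) simp
    also have "\<dots> = (1 - 1 / real k) + 1 / real n"
      using k1 that by (simp add: field_simps of_nat_diff)
    finally show ?thesis unfolding X_def rmax I(2) by simp
  qed
  have lim1: "(\<lambda>n. ereal ((1 - 1 / real k) + 1 / real n)) \<longlonglongrightarrow> ereal (1 - 1 / real k)"
    by (intro tendsto_intros lim_1_over_n[THEN tendsto_add[OF tendsto_const], simplified])
  have le1: "limsup X \<le> ereal (1 - 1 / real k)"
  proof -
    have "limsup X \<le> limsup (\<lambda>n. ereal ((1 - 1 / real k) + 1 / real n))"
      by (rule Limsup_mono) (use upper in \<open>auto simp: eventually_sequentially\<close>)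
    also have "\<dots> = ereal (1 - 1 / real k)" by (rule lim_imp_Limsup[OF _ lim1]) simp
    finally show ?thesis .
  qed
  define rr where "rr m = k + 2 * k * m" for m
  have smr: "strict_mono rr" unfolding rr_def using k1 by (intro strict_monoI) auto
  have lowX: "ereal ((1 - 1 / real k) - 1 / real m) \<le> X (rr m)" if "m \<ge> 1" for m
  proof -
    have Win: "Aseq k @ Rseq k m \<in> S (rr m)"
      using resp_W[OF assms(1) kN, of m] len_R[OF k1, of m] by (simp add: S_def rr_def Aseq_def)
    have DW: "D (Aseq k @ Rseq k m) = int (2 * k * m) - int (2 * m)"
      using LRU_W[OF k1, of m] FWF_W[OF k1, of m] by (simp add: D_def)
    have "D (Aseq k @ Rseq k m) \<le> Max (D ` S (rr m))"
      using finS Win by (intro Max_ge) auto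
    then have ge: "real (2 * k * m) - real (2 * m) \<le> real_of_int (Max (D ` S (rr m)))"
      unfolding DW by linarith
    have "(1 - 1 / real k) - 1 / real m \<le> (real (2 * k * m) - real (2 * m)) / real (rr m)"
    proof -
      have km: "real k \<ge> 1" "real m \<ge> 1" using k1 that by auto
      have "(1 - 1 / real k) - 1 / real m = ((real k - 1) * real m - real k) / (real k * real m)"
        using km by (simp add: field_simps)
      also have "\<dots> \<le> (real (2 * k * m) - real (2 * m)) / real (rr m)"
      proof -
        define a where "a = real k"
        define b where "b = real m"
        have ab: "a \<ge> 1" "b \<ge> 1" using km by (auto simp: a_def b_def)
        have e: "((a - 1) * b - a) * (a + 2*a*b) = (2*a*b - 2*b) * (a*b) + ((a-1)*b*a - a*a - 2*a*a*b)"
          by (simp add: algebra_simps)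
        have i1: "(a-1)*b*a \<le> 2*a*b*a" using ab by (intro mult_right_mono) auto
        have i2: "0 \<le> a*a" by simp
        have cm: "((a - 1) * b - a) * (a + 2*a*b) \<le> (2*a*b - 2*b) * (a*b)"
          using e i1 i2 by (simp add: algebra_simps)
        have pos1: "0 < a*b" using ab by auto
        have pos: "0 < a*b" "0 < a + 2*a*b" using ab pos1 by linarith+
        have "((a - 1) * b - a) / (a * b) \<le> (2*a*b - 2*b) / (a + 2*a*b)"
          using cm pos by (simp add: divide_le_eq le_divide_eq mult.commute)
        moreover have "real (2 * k * m) - real (2 * m) = 2*a*b - 2*b" "real (rr m) = a + 2*a*b"
          by (simp_all add: a_def b_def rr_def)
        ultimately show ?thesis by (simp add: a_def b_def)
      qed
      finally show ?thesis .
    qed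
    also have "\<dots> \<le> real_of_int (Max (D ` S (rr m))) / real (rr m)"
      using ge by (simp add: divide_right_mono)
    finally show ?thesis unfolding X_def rmax by simp
  qed
  have lim2: "(\<lambda>m. ereal ((1 - 1 / real k) - 1 / real m)) \<longlonglongrightarrow> ereal (1 - 1 / real k)"
    by (intro tendsto_intros lim_1_over_n[THEN tendsto_diff[OF tendsto_const], simplified])
  have ge1: "ereal (1 - 1 / real k) \<le> limsup X"
  proof -
    have "ereal (1 - 1 / real k) = limsup (\<lambda>m. ereal ((1 - 1 / real k) - 1 / real m))"
      by (rule lim_imp_Limsup[OF _ lim2, symmetric]) simp
    also have "\<dots> \<le> limsup (X \<circ> rr)"
      by (rule Limsup_mono) (use lowX in \<open>auto simp: eventually_sequentially\<close>)
    also have "\<dots> \<le> limsup X" by (rule limsup_subseq_mono[OF smr])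
    finally show ?thesis .
  qed
  have "MaxG (FWF k) (LRU k) {..<N} (cycle_adj N) = limsup X"
    unfolding MaxG_def X_def ..
  then show ?thesis using part1 le1 ge1 by simp
qed

end
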